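(* Let $G$ be a central product of finite groups $H$ and $K$. Then the $c$-dimension of $G$ is at least the sum of the $c$-dimensions of $H$ and $K$.
   Context: The $c$-dimension of a group $G$ is the maximal length $k$ of a chain of nested centralizers $C_G(Y_0)<C_G(Y_1)<\dots<C_G(Y_k)$ (strict inclusions) of subsets $Y_i\subseteq G$. A group $G$ is a central product of $H$ and $K$ if $G=HK$ where $H,K$ are subgroups of $G$ with $[H,K]=1$ (equivalently, $G$ is a quotient of $H\times K$ by a central subgroup intersecting $H$ and $K$ trivially, and $H,K$ are identified with their images). *)

theory Defs
  imports "HOL-Algebra.Algebra"
begin

definition centralizer :: "('a, 'b) monoid_scheme \<Rightarrow> 'a set \<Rightarrow> 'a set" where
  "centralizer G Y = {g \<in> carrier G. \<forall>y\<in>Y. g \<otimes>\<^bsub>G\<^esub> y = y \<otimes>\<^bsub>G\<^esub> g}"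

definition centralizer_chain :: "('a, 'b) monoid_scheme \<Rightarrow> nat \<Rightarrow> bool" where
  "centralizer_chain G k \<longleftrightarrow> (\<exists>Ys :: nat \<Rightarrow> 'a set.
      (\<forall>i\<le>k. Ys i \<subseteq> carrier G) \<and>
      (\<forall>i<k. centralizer G (Ys i) \<subset> centralizer G (Ys (Suc i))))"

text \<open>c-dimension: the maximal length of such a chain (meaningful for finite groups).\<close>
definition cdim :: "('a, 'b) monoid_scheme \<Rightarrow> nat" where
  "cdim G = Max {k. centralizer_chain G k}"

end

theory Submission
  imports Defs
begin

lemma comm_iff:
  fixes G :: "('a, 'b) monoid_scheme" (structure)
  assumes "group G" "h \<in> carrier G" "k \<in> carrier G" "a \<in> carrier G"
    "a \<otimes>\<^bsub>G\<^esub> k = k \<otimes>\<^bsub>G\<^esub> a"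
  shows "((h \<otimes>\<^bsub>G\<^esub> k) \<otimes>\<^bsub>G\<^esub> a = a \<otimes>\<^bsub>G\<^esub> (h \<otimes>\<^bsub>G\<^esub> k))
         \<longleftrightarrow> (h \<otimes>\<^bsub>G\<^esub> a = a \<otimes>\<^bsub>G\<^esub> h)"
proof -
  interpret group G by fact
  have 1: "(h \<otimes> k) \<otimes> a = (h \<otimes> a) \<otimes> k"
    using assms by (simp add: m_assoc)
  have 2: "a \<otimes> (h \<otimes> k) = (a \<otimes> h) \<otimes> k"
    using assms by (simp add: m_assoc)
  show ?thesis unfolding 1 2 using assms by simp
qed

lemma step:
  fixes G :: "('a, 'b) monoid_scheme" (structure)
  assumes G: "group G" and sH: "subgroup H G" and sK: "subgroup K G"
    and HK: "H <#>\<^bsub>G\<^esub> K = carrier G"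
    and cm: "\<forall>h\<in>H. \<forall>k\<in>K. h \<otimes>\<^bsub>G\<^esub> k = k \<otimes>\<^bsub>G\<^esub> h"
    and A: "A \<subseteq> H" and A': "A' \<subseteq> H" and B: "B \<subseteq> K"
    and lt: "centralizer (G\<lparr>carrier := H\<rparr>) A \<subset> centralizer (G\<lparr>carrier := H\<rparr>) A'"
  shows "centralizer G (A \<union> B) \<subset> centralizer G (A' \<union> B)"
proof -
  interpret group G by fact
  have Hc: "H \<subseteq> carrier G" using sH subgroup.subset by blast
  have Kc: "K \<subseteq> carrier G" using sK subgroup.subset by blast
  have CH: "centralizer (G\<lparr>carrier := H\<rparr>) Y = {g \<in> H. \<forall>y\<in>Y. g \<otimes> y = y \<otimes> g}" for Y
    unfolding centralizer_def by simp
  have sub: "centralizer G (A \<union> B) \<subseteq> centralizer G (A' \<union> B)"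
  proof
    fix g assume g: "g \<in> centralizer G (A \<union> B)"
    then have gc: "g \<in> carrier G" and ga: "\<forall>y\<in>A \<union> B. g \<otimes> y = y \<otimes> g"
      unfolding centralizer_def by auto
    from gc HK have "g \<in> (\<Union>h\<in>H. \<Union>k\<in>K. {h \<otimes> k})"
      unfolding set_mult_def by simp
    then obtain h k where h: "h \<in> H" and k: "k \<in> K" and gd: "g = h \<otimes> k"
      by blast
    have hA: "\<forall>a\<in>A. h \<otimes> a = a \<otimes> h"
    proof
      fix a assume a: "a \<in> A"
      have "a \<otimes> k = k \<otimes> a" using cm a A k by blast
      then show "h \<otimes> a = a \<otimes> h"
        using comm_iff[OF G, of h k a] ga a gd h k a A Hc Kc by auto
    qed
    then have "h \<in> centralizer (G\<lparr>carrier := H\<rparr>) A" using h CH by auto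
    then have "h \<in> centralizer (G\<lparr>carrier := H\<rparr>) A'" using lt by auto
    then have hA': "\<forall>a\<in>A'. h \<otimes> a = a \<otimes> h" using CH by auto
    have "\<forall>a\<in>A'. g \<otimes> a = a \<otimes> g"
    proof
      fix a assume a: "a \<in> A'"
      have "a \<otimes> k = k \<otimes> a" using cm a A' k by blast
      then show "g \<otimes> a = a \<otimes> g"
        using comm_iff[OF G, of h k a] hA' a gd h k A' Hc Kc by auto
    qed
    then show "g \<in> centralizer G (A' \<union> B)"
      using ga gc unfolding centralizer_def by auto
  qed
  obtain h where h1: "h \<in> centralizer (G\<lparr>carrier := H\<rparr>) A'"
    and h2: "h \<notin> centralizer (G\<lparr>carrier := H\<rparr>) A" using lt by blast
  have hH: "h \<in> H" and hA': "\<forall>a\<in>A'. h \<otimes> a = a \<otimes> h" using h1 CH by auto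
  have hB: "\<forall>b\<in>B. h \<otimes> b = b \<otimes> h" using cm hH B by blast
  have "h \<in> centralizer G (A' \<union> B)"
    unfolding centralizer_def using hH Hc hA' hB by auto
  moreover have "h \<notin> centralizer G (A \<union> B)"
    using h2 hH unfolding CH unfolding centralizer_def by auto
  ultimately show ?thesis using sub by blast
qed

lemma chain_bound:
  assumes fin: "finite (carrier M)" and ch: "centralizer_chain M k"
  shows "k \<le> card (carrier M)"
proof -
  obtain Ys where lt: "\<forall>i<k. centralizer M (Ys i) \<subset> centralizer M (Ys (Suc i))"
    using ch unfolding centralizer_chain_def by blast
  define C where "C i = centralizer M (Ys i)" for i
  have Cs: "C i \<subseteq> carrier M" for i unfolding C_def centralizer_def by auto
  have "j \<le> k \<Longrightarrow> j \<le> card (C j)" for j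
  proof (induction j)
    case 0 then show ?case by simp
  next
    case (Suc j)
    have "C j \<subset> C (Suc j)" using lt Suc.prems unfolding C_def by auto
    moreover have "finite (C (Suc j))" using Cs fin finite_subset by blast
    ultimately have "card (C j) < card (C (Suc j))" by (simp add: psubset_card_mono)
    then show ?case using Suc by simp
  qed
  then have "k \<le> card (C k)" by simp
  also have "\<dots> \<le> card (carrier M)" using Cs fin card_mono by blast
  finally show ?thesis .
qed

lemma cdim_props:
  assumes fin: "finite (carrier M)"
  shows "centralizer_chain M (cdim M)" and "\<And>k. centralizer_chain M k \<Longrightarrow> k \<le> cdim M"
proof -
  have f: "finite {k. centralizer_chain M k}"
  proof (rule finite_subset)
    show "{k. centralizer_chain M k} \<subseteq> {..card (carrier M)}" using chain_bound[OF fin] by auto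
  qed simp
  have "centralizer_chain M 0" unfolding centralizer_chain_def
    by (rule exI[of _ "\<lambda>_. {}"]) simp
  then have ne: "{k. centralizer_chain M k} \<noteq> {}" by blast
  show "centralizer_chain M (cdim M)" unfolding cdim_def using Max_in[OF f ne] by simp
  show "\<And>k. centralizer_chain M k \<Longrightarrow> k \<le> cdim M" unfolding cdim_def using Max_ge[OF f] by simp
qed

theorem lemma4:
  fixes G :: "('a, 'b) monoid_scheme" and H K :: "'a set"
  assumes "group G"
    and "subgroup H G" and "subgroup K G"
    and "finite H" and "finite K"
    and "H <#>\<^bsub>G\<^esub> K = carrier G"
    and "\<forall>h\<in>H. \<forall>k\<in>K. h \<otimes>\<^bsub>G\<^esub> k = k \<otimes>\<^bsub>G\<^esub> h"
  shows "cdim (G\<lparr>carrier := H\<rparr>) + cdim (G\<lparr>carrier := K\<rparr>) \<le> cdim G"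
proof -
  note G = assms(1) and sH = assms(2) and sK = assms(3) and HK = assms(6) and cm = assms(7)
  have Hc: "H \<subseteq> carrier G" using sH subgroup.subset by blast
  have Kc: "K \<subseteq> carrier G" using sK subgroup.subset by blast
  have KH: "K <#>\<^bsub>G\<^esub> H = carrier G"
  proof -
    have "K <#>\<^bsub>G\<^esub> H = H <#>\<^bsub>G\<^esub> K"
      unfolding set_mult_def
    proof (intro equalityI subsetI)
      fix x assume "x \<in> (\<Union>h\<in>K. \<Union>k\<in>H. {h \<otimes>\<^bsub>G\<^esub> k})"
      then obtain a b where ab: "a \<in> K" "b \<in> H" "x = a \<otimes>\<^bsub>G\<^esub> b" by blast
      then have "x = b \<otimes>\<^bsub>G\<^esub> a" using cm by simp
      then show "x \<in> (\<Union>h\<in>H. \<Union>k\<in>K. {h \<otimes>\<^bsub>G\<^esub> k})" using ab by blast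
    next
      fix x assume "x \<in> (\<Union>h\<in>H. \<Union>k\<in>K. {h \<otimes>\<^bsub>G\<^esub> k})"
      then obtain a b where ab: "a \<in> H" "b \<in> K" "x = a \<otimes>\<^bsub>G\<^esub> b" by blast
      then have "x = b \<otimes>\<^bsub>G\<^esub> a" using cm by blast
      then show "x \<in> (\<Union>h\<in>K. \<Union>k\<in>H. {h \<otimes>\<^bsub>G\<^esub> k})" using ab by blast
    qed
    then show ?thesis using HK by simp
  qed
  have cm': "\<forall>k\<in>K. \<forall>h\<in>H. k \<otimes>\<^bsub>G\<^esub> h = h \<otimes>\<^bsub>G\<^esub> k" using cm by metis
  have finG: "finite (carrier G)"
  proof -
    have "finite (\<Union>h\<in>H. \<Union>k\<in>K. {h \<otimes>\<^bsub>G\<^esub> k})" using assms(4,5) by auto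
    then show ?thesis using HK unfolding set_mult_def by simp
  qed
  define m where "m = cdim (G\<lparr>carrier := H\<rparr>)"
  define n where "n = cdim (G\<lparr>carrier := K\<rparr>)"
  have "centralizer_chain (G\<lparr>carrier := H\<rparr>) m"
    unfolding m_def by (rule cdim_props(1)) (simp add: assms(4))
  then obtain A where A1: "\<forall>i\<le>m. A i \<subseteq> H"
    and A2: "\<forall>i<m. centralizer (G\<lparr>carrier := H\<rparr>) (A i) \<subset> centralizer (G\<lparr>carrier := H\<rparr>) (A (Suc i))"
    unfolding centralizer_chain_def by auto
  have "centralizer_chain (G\<lparr>carrier := K\<rparr>) n"
    unfolding n_def by (rule cdim_props(1)) (simp add: assms(5))
  then obtain B where B1: "\<forall>i\<le>n. B i \<subseteq> K"
    and B2: "\<forall>i<n. centralizer (G\<lparr>carrier := K\<rparr>) (B i) \<subset> centralizer (G\<lparr>carrier := K\<rparr>) (B (Suc i))"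
    unfolding centralizer_chain_def by auto
  define Y where "Y i = A (min i m) \<union> B (i - m)" for i
  have "centralizer_chain G (m + n)"
    unfolding centralizer_chain_def
  proof (rule exI[of _ Y], intro conjI allI impI)
    fix i assume i: "i \<le> m + n"
    have "A (min i m) \<subseteq> H" using A1 by simp
    then have "A (min i m) \<subseteq> carrier G" using Hc by blast
    moreover have "B (i - m) \<subseteq> K" using B1 i by simp
    then have "B (i - m) \<subseteq> carrier G" using Kc by blast
    ultimately show "Y i \<subseteq> carrier G" unfolding Y_def by auto
  next
    fix i assume i: "i < m + n"
    show "centralizer G (Y i) \<subset> centralizer G (Y (Suc i))"
    proof (cases "i < m")
      case True
      then have e: "Y i = A i \<union> B 0" "Y (Suc i) = A (Suc i) \<union> B 0" unfolding Y_def by auto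
      show ?thesis unfolding e
        by (rule step[OF G sH sK HK cm]) (use True A1 A2 B1 in auto)
    next
      case False
      then have e: "Y i = B (i - m) \<union> A m" "Y (Suc i) = B (Suc (i - m)) \<union> A m"
        unfolding Y_def by (auto simp: Suc_diff_le)
      show ?thesis unfolding e
        by (rule step[OF G sK sH KH cm']) (use False i A1 B1 B2 in auto)
    qed
  qed
  then show ?thesis using cdim_props(2)[OF finG] unfolding m_def n_def by blast
qed

end
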